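(* Let $c\in\mathbb{C}$ with $|c|>1$, let $r=\sqrt{|c|^2-1}$, and define $\tau\colon S^1\to S^1$ (where $S^1=\{z\in\mathbb{C}:|z|=1\}$) by $\tau(z)=\dfrac{r^2}{\bar z-\bar c}+c$ if $|z-c|>r$ and $\tau(z)=z$ otherwise. Then for all $x,y\in S^1$, $$|\tau(x)-\tau(y)|\le\min\!\Big(1,\frac{r}{|x-c|}\Big)\min\!\Big(1,\frac{r}{|y-c|}\Big)|x-y|\le|x-y|.$$
   Context: In the Poincaré disk model $\mathbb{D}=\{|z|<1\}$ of the hyperbolic plane, $\{z\in\mathbb{D}:|z-c|=r\}$ is a hyperbolic line not through $0$, and $\tau$ is the one-way reflection in it (reflecting points on the same side as $0$), restricted to the boundary circle $S^1$. *)

theory Defs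
  imports "HOL-Analysis.Analysis"
begin

definition refl_radius :: "complex \<Rightarrow> real" where
  "refl_radius c = sqrt ((cmod c)\<^sup>2 - 1)"

definition tau :: "complex \<Rightarrow> complex \<Rightarrow> complex" where
  "tau c z = (if cmod (z - c) > refl_radius c
              then complex_of_real ((refl_radius c)\<^sup>2) / (cnj z - cnj c) + c
              else z)"

end

theory Submission imports Defs begin

lemma inv_form: assumes "a \<noteq> 0" shows "complex_of_real (r\<^sup>2) / cnj a = complex_of_real (r\<^sup>2 / (cmod a)\<^sup>2) * a"
proof -
  have "cnj a * a = complex_of_real ((cmod a)\<^sup>2)" using complex_norm_square[of a] by (simp add: mult.commute)
  moreover have "cmod a \<noteq> 0" using assms by simp
  ultimately show ?thesis using assms
    by (simp add: field_simps)
qed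

lemma mixed: fixes a b :: complex and k r :: real
  assumes "k * (cmod a)\<^sup>2 = r\<^sup>2" "(cmod b)\<^sup>2 \<le> r\<^sup>2" "0 \<le> k" "k \<le> 1"
  shows "(cmod (complex_of_real k * a - b))\<^sup>2 \<le> k * (cmod (a - b))\<^sup>2"
proof -
  obtain a1 a2 b1 b2 where ab: "a = Complex a1 a2" "b = Complex b1 b2" by (meson complex.exhaust_sel)
  have A: "k*(a1\<^sup>2+a2\<^sup>2) = r\<^sup>2" and B: "b1\<^sup>2+b2\<^sup>2 \<le> r\<^sup>2" using assms(1,2) by (simp_all add: ab cmod_def)
  have "0 \<le> (1-k)*(r\<^sup>2 - (b1\<^sup>2+b2\<^sup>2))" using B assms(4) by simp
  moreover have "(k*a1 - b1)\<^sup>2 + (k*a2-b2)\<^sup>2 = k*(k*(a1\<^sup>2+a2\<^sup>2)) - 2*k*(a1*b1+a2*b2) + (b1\<^sup>2+b2\<^sup>2)"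
    by (simp add: power2_eq_square algebra_simps)
  moreover have "k*((a1-b1)\<^sup>2+(a2-b2)\<^sup>2) = k*(a1\<^sup>2+a2\<^sup>2) - 2*k*(a1*b1+a2*b2) + k*(b1\<^sup>2+b2\<^sup>2)"
    by (simp add: power2_eq_square algebra_simps)
  ultimately have "(k*a1 - b1)\<^sup>2 + (k*a2-b2)\<^sup>2 \<le> k*((a1-b1)\<^sup>2+(a2-b2)\<^sup>2)"
    unfolding A by (simp add: algebra_simps)
  thus ?thesis by (simp add: ab cmod_def Complex_eq)
qed

lemma mixed2: fixes a b :: complex and r :: real
  assumes "r \<ge> 0" "cmod a > r" "cmod b \<le> r"
  shows "cmod (complex_of_real (r\<^sup>2) / cnj a - b) \<le> r / cmod a * cmod (a - b)"
proof -
  have a0: "a \<noteq> 0" "cmod a > 0" using assms by auto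
  define k where "k = r\<^sup>2 / (cmod a)\<^sup>2"
  have k1: "k * (cmod a)\<^sup>2 = r\<^sup>2" using a0 by (simp add: k_def)
  have k2: "0 \<le> k" by (simp add: k_def)
  have "r\<^sup>2 \<le> (cmod a)\<^sup>2" using assms power_mono[of r "cmod a" 2] by linarith
  hence k3: "k \<le> 1" using a0 unfolding k_def by (simp add: divide_le_eq_1)
  have b2: "(cmod b)\<^sup>2 \<le> r\<^sup>2" using assms power_mono[of "cmod b" r 2] by simp
  have "(cmod (complex_of_real (r\<^sup>2) / cnj a - b))\<^sup>2 \<le> k * (cmod (a - b))\<^sup>2"
    using mixed[OF k1 b2 k2 k3] inv_form[OF a0(1), of r] by (simp add: k_def)
  also have "\<dots> = (r / cmod a * cmod (a - b))\<^sup>2" by (simp add: k_def power_mult_distrib power_divide)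
  finally have "(cmod (complex_of_real (r\<^sup>2) / cnj a - b))\<^sup>2 \<le> (r / cmod a * cmod (a - b))\<^sup>2" .
  moreover have "0 \<le> r / cmod a * cmod (a - b)" using assms(1) by simp
  ultimately show ?thesis by (rule power2_le_imp_le)
qed

lemma both_out: fixes a b :: complex and r :: real
  assumes "a \<noteq> 0" "b \<noteq> 0" "r \<ge> 0"
  shows "cmod (complex_of_real (r\<^sup>2) / cnj a - complex_of_real (r\<^sup>2) / cnj b) = r / cmod a * (r / cmod b) * cmod (a - b)"
proof -
  have "complex_of_real (r\<^sup>2) / cnj a - complex_of_real (r\<^sup>2) / cnj b = complex_of_real (r\<^sup>2) * cnj (b - a) / (cnj a * cnj b)"
    using assms by (simp add: divide_simps) (simp add: algebra_simps)
  moreover have "cmod (cnj (b - a)) = cmod (b - a)" by (rule complex_mod_cnj)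
  ultimately have "cmod (complex_of_real (r\<^sup>2) / cnj a - complex_of_real (r\<^sup>2) / cnj b) = r\<^sup>2 * cmod (b - a) / (cmod a * cmod b)"
    by (simp only: norm_mult norm_divide norm_of_real abs_power2 of_real_power[symmetric] complex_cnj_mult[symmetric] complex_mod_cnj)
  thus ?thesis by (simp add: norm_minus_commute power2_eq_square)
qed

theorem mainTheorem5:
  fixes c x y :: complex
  assumes "cmod c > 1" and "cmod x = 1" and "cmod y = 1"
  shows "cmod (tau c x - tau c y)
           \<le> min 1 (refl_radius c / cmod (x - c)) * min 1 (refl_radius c / cmod (y - c)) * cmod (x - y)
       \<and> min 1 (refl_radius c / cmod (x - c)) * min 1 (refl_radius c / cmod (y - c)) * cmod (x - y)
           \<le> cmod (x - y)"
proof -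
  define r where "r = refl_radius c"
  define a where "a = x - c"
  define b where "b = y - c"
  have "1 \<le> (cmod c)\<^sup>2" using assms(1) one_le_power[of "cmod c" 2] by linarith
  hence r0: "r \<ge> 0" by (simp add: r_def refl_radius_def)
  have "cmod c \<le> cmod x + cmod (x - c)" using norm_triangle_sub[of c x] norm_minus_commute[of c x] by simp
  hence a0: "cmod a > 0" using assms by (auto simp: a_def)
  have "cmod c \<le> cmod y + cmod (y - c)" using norm_triangle_sub[of c y] norm_minus_commute[of c y] by simp
  hence b0: "cmod b > 0" using assms by (auto simp: b_def)
  have xy: "x - y = a - b" by (simp add: a_def b_def)
  have ca: "cnj x - cnj c = cnj a" "cnj y - cnj c = cnj b" by (simp_all add: a_def b_def)
  define ma where "ma = min 1 (r / cmod a)"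
  define mb where "mb = min 1 (r / cmod b)"
  have ma: "0 \<le> ma" "ma \<le> 1" using r0 by (auto simp: ma_def)
  have mb: "0 \<le> mb" "mb \<le> 1" using r0 by (auto simp: mb_def)
  have main: "cmod (tau c x - tau c y) \<le> ma * mb * cmod (a - b)"
  proof (cases "cmod a > r")
    case ao: True
    hence mae: "ma = r / cmod a" using a0 by (simp add: ma_def)
    show ?thesis
    proof (cases "cmod b > r")
      case True
      hence mbe: "mb = r / cmod b" using b0 by (simp add: mb_def)
      have "tau c x - tau c y = complex_of_real (r\<^sup>2) / cnj a - complex_of_real (r\<^sup>2) / cnj b"
        using ao True unfolding tau_def r_def[symmetric] a_def[symmetric] b_def[symmetric] ca by simp
      thus ?thesis using both_out[of a b r] a0 b0 r0 mae mbe by auto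
    next
      case False
      hence mbe: "mb = 1" using b0 by (simp add: mb_def)
      have "tau c x - tau c y = complex_of_real (r\<^sup>2) / cnj a - b"
        using ao False unfolding tau_def r_def[symmetric] a_def[symmetric] b_def[symmetric] ca by (simp add: b_def)
      thus ?thesis using mixed2[of r a b] ao False r0 mae mbe by auto
    qed
  next
    case ai: False
    hence mae: "ma = 1" using a0 by (simp add: ma_def)
    show ?thesis
    proof (cases "cmod b > r")
      case True
      hence mbe: "mb = r / cmod b" using b0 by (simp add: mb_def)
      have "tau c x - tau c y = a - complex_of_real (r\<^sup>2) / cnj b"
        using ai True unfolding tau_def r_def[symmetric] a_def[symmetric] b_def[symmetric] ca by (simp add: a_def)
      thus ?thesis using mixed2[of r b a] ai True r0 mae mbe by (auto simp: norm_minus_commute)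
    next
      case False
      have "tau c x - tau c y = a - b"
        using ai False unfolding tau_def r_def[symmetric] a_def[symmetric] b_def[symmetric] by (simp add: a_def b_def)
      moreover have "mb = 1" using b0 False by (simp add: mb_def)
      ultimately show ?thesis using mae by simp
    qed
  qed
  have "ma * mb * cmod (a - b) \<le> cmod (a - b)"
    using ma mb by (simp add: mult_le_one mult_left_le_one_le)
  thus ?thesis using main unfolding xy ma_def mb_def r_def a_def b_def by simp
qed

end
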